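(* Let $\Lambda,\hat x,\mathcal R,V$ be as in the context and let $[u]\in\dot{\mathcal H}^1$ satisfy $u(L_\Lambda x)=u(x)$ for all $x\in\Lambda$. Let $f_u=-\mathrm{div}_{\mathcal R}(\nabla^2V(0)[D_{\mathcal R}u])$. Then, provided the respective sums converge absolutely, $$\sum_{x\in\Lambda}f_u(x)=0,\qquad\sum_{x\in\Lambda}f_u(x)\,x=0,\qquad\sum_{x\in\Lambda}f_u(x)\,x\otimes x=c\,\mathrm{Id}\ \text{ for some }c\in\mathbb{R}.$$
   Context: $\Lambda=A_\Lambda\mathbb{Z}^2$ is the square lattice ($A_\Lambda=\mathrm{Id}$) or triangular lattice ($A_\Lambda=\begin{pmatrix}1&\frac12\\0&\frac{\sqrt3}{2}\end{pmatrix}$); $Q_\Lambda$ is the rotation through $\pi/2$ (square) or $2\pi/3$ (triangular). $\hat x\in\mathbb{R}^2\setminus\Lambda$ is the centre of a unit square with vertices in $\Lambda$ (square) or the centroid of an equilateral triangle of side $1$ with vertices in $\Lambda$ (triangular), and $L_\Lambda x=Q_\Lambda(x-\hat x)+\hat x$ (so $L_\Lambda\Lambda=\Lambda$). $\mathcal R\subset\Lambda\setminus\{0\}$ is finite with $\mathrm{span}_\mathbb{Z}\mathcal R=\Lambda$ and $Q_\Lambda\mathcal R=\mathcal R$. $V\in C^6(\mathbb{R}^{\mathcal R},\mathbb{R})$ with $V(A)=V((A_{Q_\Lambda\rho})_{\rho\in\mathcal R})$, periodic with minimal period $p>0$ in each component, and lattice stable ($\exists c_0>0$: $\sum_x\sum_{\rho,\sigma}\nabla^2V(0)_{\rho\sigma}D_\rho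 vD_\sigma v\ge c_0\|D_{\mathcal R}v\|^2_{\ell^2}$ for all $v\in\dot{\mathcal H}^1$). $D_\rho u(x)=u(x+\rho)-u(x)$, $D_{\mathcal R}u=(D_\rho u)_{\rho\in\mathcal R}$, $\mathrm{div}_{\mathcal R}g(x)=-\sum_\rho(g_\rho(x-\rho)-g_\rho(x))$, and $\dot{\mathcal H}^1=\{u:\Lambda\to\mathbb{R}:D_{\mathcal R}u\in\ell^2(\Lambda)\}/\mathbb{R}$. *)

theory Defs
  imports "HOL-Analysis.Analysis"
begin

definition vec2 :: "real \<Rightarrow> real \<Rightarrow> real^2" where
  "vec2 a b = (\<chi> i. if i = 1 then a else b)"

datatype lattice_kind = Square | Triangular

definition lat_mat :: "lattice_kind \<Rightarrow> real^2^2" where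
  "lat_mat k = (case k of
      Square \<Rightarrow> mat 1
    | Triangular \<Rightarrow> (\<chi> i j. if i = 1 then (if j = 1 then 1 else 1/2)
                          else (if j = 1 then 0 else sqrt 3 / 2)))"

definition lattice :: "lattice_kind \<Rightarrow> (real^2) set" where
  "lattice k = {lat_mat k *v vec2 (of_int a) (of_int b) | a b :: int. True}"

definition rot :: "real \<Rightarrow> real^2^2" where
  "rot \<theta> = (\<chi> i j. if i = 1 then (if j = 1 then cos \<theta> else - sin \<theta>)
                     else (if j = 1 then sin \<theta> else cos \<theta>))"

definition lat_rot :: "lattice_kind \<Rightarrow> real^2^2" where
  "lat_rot k = (case k of Square \<Rightarrow> rot (pi/2) | Triangular \<Rightarrow> rot (2*pi/3))"

definition admissible_centre :: "lattice_kind \<Rightarrow> real^2 \<Rightarrow> bool" where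
  "admissible_centre k xh = (case k of
      Square \<Rightarrow> (\<exists>z v w. norm v = 1 \<and> norm w = 1 \<and> v \<bullet> w = 0 \<and>
                  z \<in> lattice k \<and> z + v \<in> lattice k \<and> z + w \<in> lattice k \<and>
                  z + v + w \<in> lattice k \<and> xh = z + (1/2) *\<^sub>R (v + w))
    | Triangular \<Rightarrow> (\<exists>a b c. a \<in> lattice k \<and> b \<in> lattice k \<and> c \<in> lattice k \<and>
                  dist a b = 1 \<and> dist b c = 1 \<and> dist a c = 1 \<and>
                  xh = (1/3) *\<^sub>R (a + b + c)))"

definition lat_L :: "lattice_kind \<Rightarrow> real^2 \<Rightarrow> real^2 \<Rightarrow> real^2" where
  "lat_L k xh x = lat_rot k *v (x - xh) + xh"

fun C_k :: "nat \<Rightarrow> ('a::real_normed_vector \<Rightarrow> real) \<Rightarrow> bool" where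
  "C_k 0 f = continuous_on UNIV f"
| "C_k (Suc n) f = (f differentiable_on UNIV \<and>
        (\<forall>v. C_k n (\<lambda>x. frechet_derivative f (at x) v)))"

text \<open>Hessian entry (nabla^2 V(0))_{rho sigma} of V : R^R -> R, R indexed by 'r.\<close>
definition hess0 :: "(real^'r::finite \<Rightarrow> real) \<Rightarrow> 'r \<Rightarrow> 'r \<Rightarrow> real" where
  "hess0 V r s = frechet_derivative
      (\<lambda>A. frechet_derivative V (at A) (axis s 1)) (at 0) (axis r 1)"

definition Dfd :: "(real^2 \<Rightarrow> real) \<Rightarrow> real^2 \<Rightarrow> real^2 \<Rightarrow> real" where
  "Dfd u \<rho> x = u (x + \<rho>) - u x"

definition divR :: "('r::finite \<Rightarrow> real^2) \<Rightarrow> ('r \<Rightarrow> real^2 \<Rightarrow> real) \<Rightarrow> real^2 \<Rightarrow> real" where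
  "divR \<rho> g x = - (\<Sum>r\<in>UNIV. g r (x - \<rho> r) - g r x)"

definition force :: "(real^'r::finite \<Rightarrow> real) \<Rightarrow> ('r \<Rightarrow> real^2) \<Rightarrow> (real^2 \<Rightarrow> real)
    \<Rightarrow> real^2 \<Rightarrow> real" where
  "force V \<rho> u = (\<lambda>x. - divR \<rho> (\<lambda>r y. \<Sum>s\<in>UNIV. hess0 V r s * Dfd u (\<rho> s) y) x)"

text \<open>u in dot H^1 (as representative): D_R u in l^2(Lambda).\<close>
definition in_H1 :: "(real^2) set \<Rightarrow> ('r::finite \<Rightarrow> real^2) \<Rightarrow> (real^2 \<Rightarrow> real) \<Rightarrow> bool" where
  "in_H1 \<Lambda> \<rho> u = (\<forall>r. (\<lambda>x. (Dfd u (\<rho> r) x)\<^sup>2) summable_on \<Lambda>)"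

definition lattice_stable :: "(real^2) set \<Rightarrow> ('r::finite \<Rightarrow> real^2) \<Rightarrow> (real^'r \<Rightarrow> real) \<Rightarrow> bool" where
  "lattice_stable \<Lambda> \<rho> V = (\<exists>c0>0. \<forall>v. in_H1 \<Lambda> \<rho> v \<longrightarrow>
      (\<Sum>\<^sub>\<infinity>x\<in>\<Lambda>. \<Sum>r\<in>UNIV. \<Sum>s\<in>UNIV. hess0 V r s * Dfd v (\<rho> r) x * Dfd v (\<rho> s) x)
        \<ge> c0 * (\<Sum>\<^sub>\<infinity>x\<in>\<Lambda>. \<Sum>r\<in>UNIV. (Dfd v (\<rho> r) x)\<^sup>2))"

definition outer :: "real^2 \<Rightarrow> real^2 \<Rightarrow> real^2^2" where
  "outer x y = (\<chi> i j. x $ i * y $ j)"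

end

theory Submission
  imports Defs
begin


lemma summable_on_diff_real:
  fixes f g :: "'a \<Rightarrow> real"
  assumes "f summable_on A" "g summable_on A"
  shows "(\<lambda>x. f x - g x) summable_on A"
  using summable_on_add[OF assms(1) summable_on_uminus[THEN iffD2, OF assms(2)]] by simp

lemma infsum_diff_real:
  fixes f g :: "'a \<Rightarrow> real"
  assumes "f summable_on A" "g summable_on A"
  shows "infsum (\<lambda>x. f x - g x) A = infsum f A - infsum g A"
  using infsum_add[OF assms(1) summable_on_uminus[THEN iffD2, OF assms(2)]] infsum_uminus[of g A] by simp

lemma infsum_sum_fin:
  fixes f :: "'i \<Rightarrow> 'a \<Rightarrow> real"
  assumes "finite I" "\<And>i. i \<in> I \<Longrightarrow> f i summable_on A"
  shows "(\<lambda>x. \<Sum>i\<in>I. f i x) summable_on A \<and> infsum (\<lambda>x. \<Sum>i\<in>I. f i x) A = (\<Sum>i\<in>I. infsum (f i) A)"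
  using assms by (induction I rule: finite_induct) (auto simp: summable_on_add infsum_add)

lemma fin_supp_summable:
  fixes f :: "'a \<Rightarrow> real"
  assumes "finite S" "\<And>x. x \<notin> S \<Longrightarrow> f x = 0"
  shows "f summable_on A"
proof -
  have "f summable_on (S \<inter> A)" using assms(1) by simp
  then show ?thesis
    using summable_on_cong_neutral[where S=A and T="S \<inter> A" and f=f and g=f] assms by auto
qed

lemma fin_supp_infsum:
  fixes f :: "'a \<Rightarrow> real"
  assumes "finite S" "\<And>x. x \<notin> S \<Longrightarrow> f x = 0" "S \<subseteq> A"
  shows "infsum f A = sum f S"
proof -
  have "infsum f A = infsum f S"
    by (rule infsum_cong_neutral) (use assms in auto)
  then show ?thesis using assms(1) by simp
qed

definition sq :: "nat \<Rightarrow> (int \<times> int) set" where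
  "sq N = {- int N..int N} \<times> {- int N..int N}"

lemma sq_finite[simp]: "finite (sq N)" unfolding sq_def by simp

lemma mem_sq: "z \<in> sq N \<longleftrightarrow> \<bar>fst z\<bar> \<le> int N \<and> \<bar>snd z\<bar> \<le> int N"
  unfolding sq_def by (cases z) auto

lemma card_sq: "card (sq N) = (2 * N + 1)^2"
proof -
  have "card {- int N..int N} = 2 * N + 1" by simp
  then show ?thesis unfolding sq_def by (simp add: card_cartesian_product power2_eq_square)
qed

lemma finite_bounded_sq:
  assumes "finite X"
  shows "\<exists>M. X \<subseteq> sq M"
  using assms
proof (induction X rule: finite_induct)
  case empty then show ?case by auto
next
  case (insert x F)
  then obtain M where M: "F \<subseteq> sq M" by auto
  define M' where "M' = max M (nat \<bar>fst x\<bar> + nat \<bar>snd x\<bar>)"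
  have "sq M \<subseteq> sq M'" unfolding M'_def by (auto simp: mem_sq)
  moreover have "x \<in> sq M'" unfolding M'_def by (auto simp: mem_sq)
  ultimately show ?case using M by blast
qed

lemma sq_mono: "M \<le> N \<Longrightarrow> sq M \<subseteq> sq N"
  by (auto simp: mem_sq)

lemma tail_tendsto:
  fixes h :: "int \<times> int \<Rightarrow> real"
  assumes "h summable_on UNIV"
  shows "(\<lambda>N. infsum h (- sq N)) \<longlonglongrightarrow> 0"
proof -
  have lim: "filterlim sq (finite_subsets_at_top UNIV) sequentially"
    unfolding filterlim_finite_subsets_at_top
  proof (intro allI impI)
    fix X :: "(int\<times>int) set" assume "finite X \<and> X \<subseteq> UNIV"
    then obtain M where "X \<subseteq> sq M" using finite_bounded_sq by blast
    then show "\<forall>\<^sub>F y in sequentially. finite (sq y) \<and> X \<subseteq> sq y \<and> sq y \<subseteq> UNIV"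
      using sq_mono by (auto intro!: eventually_sequentiallyI[of M])
  qed
  have "(sum h \<longlongrightarrow> infsum h UNIV) (finite_subsets_at_top UNIV)"
    using assms has_sum_def has_sum_infsum by blast
  then have "(\<lambda>N. sum h (sq N)) \<longlonglongrightarrow> infsum h UNIV"
    using filterlim_compose[OF _ lim] by blast
  then have "(\<lambda>N. infsum h UNIV - sum h (sq N)) \<longlonglongrightarrow> infsum h UNIV - infsum h UNIV"
    by (intro tendsto_diff) auto
  moreover have "infsum h (- sq N) = infsum h UNIV - sum h (sq N)" for N
  proof -
    have "infsum h (UNIV - sq N) = infsum h UNIV - infsum h (sq N)"
      by (rule infsum_Diff) (use assms in auto)
    then show ?thesis by (simp add: Compl_eq_Diff_UNIV)
  qed
  ultimately show ?thesis by simp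
qed

definition psi :: "real \<Rightarrow> real \<Rightarrow> real" where
  "psi N t = max 0 (min 1 (2 - \<bar>t\<bar> / N))"

lemma psi_range: "0 \<le> psi N t" "psi N t \<le> 1"
  unfolding psi_def by auto

lemma psi_one: "N > 0 \<Longrightarrow> \<bar>t\<bar> \<le> N \<Longrightarrow> psi N t = 1"
  unfolding psi_def by (auto simp: field_simps)

lemma psi_zero: "N > 0 \<Longrightarrow> \<bar>t\<bar> \<ge> 2 * N \<Longrightarrow> psi N t = 0"
  unfolding psi_def by (auto simp: field_simps)

lemma psi_lip:
  assumes "N > 0"
  shows "\<bar>psi N t - psi N s\<bar> \<le> \<bar>t - s\<bar> / N"
proof -
  have "(2 - \<bar>t\<bar> / N) - (2 - \<bar>s\<bar> / N) = (\<bar>s\<bar> - \<bar>t\<bar>) / N"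
    by (simp add: diff_divide_distrib)
  then have "\<bar>(2 - \<bar>t\<bar> / N) - (2 - \<bar>s\<bar> / N)\<bar> = \<bar>\<bar>s\<bar> - \<bar>t\<bar>\<bar> / N"
    using assms by simp
  also have "\<dots> \<le> \<bar>t - s\<bar> / N"
    using assms by (intro divide_right_mono) auto
  finally have *: "\<bar>(2 - \<bar>t\<bar> / N) - (2 - \<bar>s\<bar> / N)\<bar> \<le> \<bar>t - s\<bar> / N" .
  have clip: "\<bar>max 0 (min 1 a) - max 0 (min 1 b)\<bar> \<le> \<bar>a - b\<bar>" for a b :: real
    by (auto simp: max_def min_def)
  show ?thesis unfolding psi_def using clip * order_trans by blast
qed

definition phi :: "nat \<Rightarrow> int \<times> int \<Rightarrow> real" where
  "phi N z = psi (real N) (of_int (fst z)) * psi (real N) (of_int (snd z))"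

lemma phi_range: "0 \<le> phi N z" "phi N z \<le> 1"
  unfolding phi_def using psi_range[of "real N"] by (auto intro!: mult_nonneg_nonneg mult_le_one)

lemma phi_one: "N > 0 \<Longrightarrow> z \<in> sq N \<Longrightarrow> phi N z = 1"
  unfolding phi_def mem_sq by (auto simp: psi_one)

lemma phi_zero: "N > 0 \<Longrightarrow> z \<notin> sq (2 * N) \<Longrightarrow> phi N z = 0"
proof -
  assume N: "N > 0" and z: "z \<notin> sq (2 * N)"
  then have "\<bar>fst z\<bar> \<ge> 2 * int N \<or> \<bar>snd z\<bar> \<ge> 2 * int N" unfolding mem_sq by auto
  then have "\<bar>real_of_int (fst z)\<bar> \<ge> 2 * real N \<or> \<bar>real_of_int (snd z)\<bar> \<ge> 2 * real N"
  proof
    assume "\<bar>fst z\<bar> \<ge> 2 * int N"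
    then have "real_of_int (2 * int N) \<le> real_of_int \<bar>fst z\<bar>" by (simp only: of_int_le_iff)
    then show ?thesis by simp
  next
    assume "\<bar>snd z\<bar> \<ge> 2 * int N"
    then have "real_of_int (2 * int N) \<le> real_of_int \<bar>snd z\<bar>" by (simp only: of_int_le_iff)
    then show ?thesis by simp
  qed
  then show ?thesis unfolding phi_def using N psi_zero by auto
qed

lemma phi_lip:
  assumes "N > 0"
  shows "\<bar>phi N (z + w) - phi N z\<bar> \<le> (\<bar>of_int (fst w)\<bar> + \<bar>of_int (snd w)\<bar>) / real N"
proof -
  define a where "a = psi (real N) (of_int (fst (z + w)))"
  define b where "b = psi (real N) (of_int (snd (z + w)))"
  define c where "c = psi (real N) (of_int (fst z))"
  define d where "d = psi (real N) (of_int (snd z))"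
  have r: "0 \<le> a" "a \<le> 1" "0 \<le> b" "b \<le> 1" "0 \<le> c" "c \<le> 1" "0 \<le> d" "d \<le> 1"
    unfolding a_def b_def c_def d_def using psi_range by auto
  have ac: "\<bar>a - c\<bar> \<le> \<bar>of_int (fst w)\<bar> / real N"
    unfolding a_def c_def using psi_lip[of "real N" "of_int (fst z) + of_int (fst w)" "of_int (fst z)"] assms by (simp add: algebra_simps)
  have bd: "\<bar>b - d\<bar> \<le> \<bar>of_int (snd w)\<bar> / real N"
    unfolding b_def d_def using psi_lip[of "real N" "of_int (snd z) + of_int (snd w)" "of_int (snd z)"] assms by (simp add: algebra_simps)
  have "a * b - c * d = (a - c) * b + c * (b - d)" by (simp add: algebra_simps)
  then have "\<bar>a * b - c * d\<bar> \<le> \<bar>a - c\<bar> * \<bar>b\<bar> + \<bar>c\<bar> * \<bar>b - d\<bar>"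
    by (metis abs_mult abs_triangle_ineq)
  also have "\<dots> \<le> \<bar>a - c\<bar> + \<bar>b - d\<bar>"
    using r by (intro add_mono) (auto intro: mult_left_le mult_le_one simp: abs_mult mult_left_le_one_le)
  also have "\<dots> \<le> (\<bar>of_int (fst w)\<bar> + \<bar>of_int (snd w)\<bar>) / real N"
    using ac bd by (simp add: add_divide_distrib)
  finally show ?thesis unfolding phi_def a_def b_def c_def d_def by simp
qed




lemma term_bound:
  fixes G :: "int \<times> int \<Rightarrow> real" and w :: "int \<times> int" and K N :: nat
  assumes G2: "(\<lambda>z. (G z)^2) summable_on UNIV"
  and K: "\<bar>fst w\<bar> \<le> int K" "\<bar>snd w\<bar> \<le> int K" "1 \<le> K" "K \<le> N"
  shows "\<bar>infsum (\<lambda>z. G z * (phi N (z + w) - phi N z)) UNIV\<bar>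
          \<le> 14 * K * sqrt (infsum (\<lambda>z. (G z)^2) (- sq (N - K)))"
proof -
  define d where "d z = phi N (z + w) - phi N z" for z
  define A where "A = sq (2*N+K) - sq (N-K)"
  define T where "T = infsum (\<lambda>z. (G z)^2) (- sq (N - K))"
  have N0: "N > 0" using K by linarith
  have finA: "finite A" unfolding A_def by simp
  have KN: "int (N - K) = int N - int K" using K by simp
  have supp: "G z * d z = 0" if "z \<notin> A" for z
  proof (cases "z \<in> sq (N-K)")
    case True
    then have "z \<in> sq N" "z + w \<in> sq N" using K KN by (auto simp: mem_sq)
    then show ?thesis using phi_one N0 d_def by simp
  next
    case False
    then have "z \<notin> sq (2*N+K)" using that A_def by auto
    then have "z \<notin> sq (2*N)" "z + w \<notin> sq (2*N)" using K by (auto simp: mem_sq)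
    then show ?thesis using phi_zero N0 d_def by simp
  qed
  have eq: "infsum (\<lambda>z. G z * d z) UNIV = (\<Sum>z\<in>A. G z * d z)"
    by (rule fin_supp_infsum) (use finA supp in auto)
  have dbound: "\<bar>d z\<bar> \<le> 2 * K / N" for z
  proof -
    have "\<bar>d z\<bar> \<le> (\<bar>of_int (fst w)\<bar> + \<bar>of_int (snd w)\<bar>) / real N"
      using phi_lip[OF N0, of z w] d_def by simp
    also have "\<dots> \<le> 2 * K / N"
    proof -
      have "\<bar>real_of_int (fst w)\<bar> \<le> real K" "\<bar>real_of_int (snd w)\<bar> \<le> real K"
        using K(1,2) by (metis of_int_abs of_int_le_iff of_int_of_nat_eq)+
      then have "\<bar>real_of_int (fst w)\<bar> + \<bar>real_of_int (snd w)\<bar> \<le> 2 * real K" by simp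
      then show ?thesis by (intro divide_right_mono) simp_all
    qed
    finally show ?thesis .
  qed
  have s1: "\<bar>\<Sum>z\<in>A. G z * d z\<bar> \<le> (\<Sum>z\<in>A. \<bar>G z\<bar> * (2*K/N))"
  proof (rule order_trans[OF sum_abs], rule sum_mono)
    fix z
    have "\<bar>G z\<bar> * \<bar>d z\<bar> \<le> \<bar>G z\<bar> * (2*K/N)" by (rule mult_left_mono[OF dbound]) simp
    then show "\<bar>G z * d z\<bar> \<le> \<bar>G z\<bar> * (2*K/N)" by (simp add: abs_mult)
  qed
  have s2: "(\<Sum>z\<in>A. \<bar>G z\<bar> * (2*K/N)) = (2*K/N) * (\<Sum>z\<in>A. \<bar>G z\<bar>)"
    by (simp add: sum_distrib_left sum_divide_distrib mult.commute)
  have ASub: "A \<subseteq> - sq (N - K)" unfolding A_def by auto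
  have sumG2: "(\<Sum>z\<in>A. (G z)^2) \<le> T"
    unfolding T_def
    by (rule finite_sum_le_infsum) (use summable_on_subset[OF G2] finA ASub in auto)
  have T0: "0 \<le> T" unfolding T_def by (rule infsum_nonneg) auto
  have cardA: "real (card A) \<le> (7 * real N)^2"
  proof -
    have "card A \<le> card (sq (2*N+K))" unfolding A_def by (rule card_mono) auto
    also have "\<dots> = (2 * (2*N+K) + 1)^2" by (rule card_sq)
    also have "\<dots> \<le> (7 * N)^2" using K by (intro power_mono) auto
    finally have "card A \<le> (7 * N)^2" .
    then have "real (card A) \<le> real ((7 * N)^2)" by (simp only: of_nat_le_iff)
    then show ?thesis by simp
  qed
  have "(\<Sum>z\<in>A. \<bar>G z\<bar>)^2 \<le> (\<Sum>z\<in>A. \<bar>G z\<bar>^2) * card A"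
    by (rule sum_squared_le_sum_of_squares)
  also have "\<dots> = (\<Sum>z\<in>A. (G z)^2) * card A" by simp
  also have "\<dots> \<le> T * (7 * real N)^2"
    using sumG2 cardA T0 by (intro mult_mono) (auto intro: sum_nonneg)
  finally have "(\<Sum>z\<in>A. \<bar>G z\<bar>) \<le> sqrt (T * (7 * real N)^2)"
    by (rule real_le_rsqrt)
  also have "\<dots> = 7 * N * sqrt T" by (simp add: real_sqrt_mult)
  finally have s3: "(\<Sum>z\<in>A. \<bar>G z\<bar>) \<le> 7 * N * sqrt T" .
  have "\<bar>infsum (\<lambda>z. G z * d z) UNIV\<bar> \<le> (2*K/N) * (7 * N * sqrt T)"
    using eq s1 s2 s3 by (smt (verit) divide_nonneg_nonneg mult_left_mono of_nat_0_le_iff)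
  also have "\<dots> = 14 * K * sqrt T" using N0 by simp
  finally show ?thesis unfolding d_def T_def .
qed

lemma core:
  fixes F :: "int \<times> int \<Rightarrow> real" and G :: "'r::finite \<Rightarrow> int \<times> int \<Rightarrow> real"
    and w :: "'r \<Rightarrow> int \<times> int"
  assumes G2: "\<And>r. (\<lambda>z. (G r z)^2) summable_on UNIV"
  and F: "\<And>z. F z = (\<Sum>r\<in>UNIV. G r (z - w r) - G r z)"
  and Fs: "(\<lambda>z. norm (F z)) summable_on UNIV"
  shows "infsum F UNIV = 0"
proof -
  define K :: nat where "K = 1 + (\<Sum>r\<in>UNIV. nat \<bar>fst (w r)\<bar> + nat \<bar>snd (w r)\<bar>)"
  have K1: "1 \<le> K" unfolding K_def by simp
  have Kw: "\<bar>fst (w r)\<bar> \<le> int K \<and> \<bar>snd (w r)\<bar> \<le> int K" for r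
  proof -
    have "nat \<bar>fst (w r)\<bar> + nat \<bar>snd (w r)\<bar> \<le> (\<Sum>r\<in>UNIV. nat \<bar>fst (w r)\<bar> + nat \<bar>snd (w r)\<bar>)"
      by (rule member_le_sum) auto
    then show ?thesis unfolding K_def by linarith
  qed
  define T where "T r M = infsum (\<lambda>z. (G r z)^2) (- sq M)" for r M
  define TF where "TF M = infsum (\<lambda>z. norm (F z)) (- sq M)" for M
  have Fsum: "F summable_on UNIV" using Fs summable_on_iff_abs_summable_on_real by blast
  have bound: "\<bar>infsum F UNIV\<bar> \<le> TF (M + K) + (\<Sum>r\<in>UNIV. 14 * K * sqrt (T r M))" for M
  proof -
    define N where "N = M + K"
    have N0: "N > 0" "K \<le> N" "N - K = M" using K1 N_def by auto
    have phiz: "\<And>z. z \<notin> sq (2*N) \<Longrightarrow> phi N z = 0" using phi_zero N0 by blast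
    have Fphi_s: "(\<lambda>z. F z * phi N z) summable_on UNIV"
      by (rule fin_supp_summable[of "sq (2*N)"]) (auto simp: phiz)
    have e1: "infsum F UNIV - infsum (\<lambda>z. F z * phi N z) UNIV
        = infsum (\<lambda>z. F z * (1 - phi N z)) (- sq N)"
    proof -
      have "infsum F UNIV - infsum (\<lambda>z. F z * phi N z) UNIV = infsum (\<lambda>z. F z - F z * phi N z) UNIV"
        using infsum_diff_real[OF Fsum Fphi_s] by simp
      also have "\<dots> = infsum (\<lambda>z. F z * (1 - phi N z)) (- sq N)"
        by (rule infsum_cong_neutral) (auto simp: phi_one[OF N0(1)] algebra_simps)
      finally show ?thesis .
    qed
    have FsN: "(\<lambda>z. norm (F z)) summable_on (- sq N)" using summable_on_subset[OF Fs] by blast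
    have abs1: "(\<lambda>z. norm (F z * (1 - phi N z))) summable_on (- sq N)"
      by (rule summable_on_comparison_test[OF FsN])
         (auto simp: abs_mult phi_range mult_left_le intro!: mult_left_le)
    have e1b: "\<bar>infsum (\<lambda>z. F z * (1 - phi N z)) (- sq N)\<bar> \<le> TF N"
    proof -
      have "norm (infsum (\<lambda>z. F z * (1 - phi N z)) (- sq N)) \<le> infsum (\<lambda>z. norm (F z * (1 - phi N z))) (- sq N)"
        by (rule norm_infsum_bound) (use abs1 in simp)
      also have "\<dots> \<le> TF N" unfolding TF_def
        by (rule infsum_mono[OF abs1 FsN]) (auto simp: abs_mult phi_range intro!: mult_left_le)
      finally show ?thesis by simp
    qed
    have e2: "infsum (\<lambda>z. F z * phi N z) UNIV
       = (\<Sum>r\<in>UNIV. infsum (\<lambda>z. G r z * (phi N (z + w r) - phi N z)) UNIV)"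
    proof -
      have sh: "\<And>r. (\<lambda>z. G r (z - w r) * phi N z) summable_on UNIV"
        by (rule fin_supp_summable[of "sq (2*N)"]) (auto simp: phiz)
      have sh0: "\<And>r. (\<lambda>z. G r z * phi N z) summable_on UNIV"
        by (rule fin_supp_summable[of "sq (2*N)"]) (auto simp: phiz)
      have sh1: "(\<lambda>z. G r z * phi N (z + w r)) summable_on UNIV" for r
      proof (rule fin_supp_summable[of "sq (2*N+K)"])
        fix z assume "z \<notin> sq (2 * N + K)"
        then have "z + w r \<notin> sq (2*N)" using Kw[of r] by (auto simp: mem_sq)
        then show "G r z * phi N (z + w r) = 0" by (simp add: phiz)
      qed simp
      have ri: "infsum (\<lambda>z. G r (z - w r) * phi N z) UNIV = infsum (\<lambda>z. G r z * phi N (z + w r)) UNIV" for r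
      proof -
        have b: "bij_betw (\<lambda>z. z + w r) UNIV UNIV"
          by (rule bij_betwI[where g="\<lambda>z. z - w r"]) auto
        show ?thesis using infsum_reindex_bij_betw[OF b, of "\<lambda>z. G r (z - w r) * phi N z"] by simp
      qed
      have "infsum (\<lambda>z. F z * phi N z) UNIV
          = infsum (\<lambda>z. \<Sum>r\<in>UNIV. G r (z - w r) * phi N z - G r z * phi N z) UNIV"
        by (simp add: F sum_distrib_right left_diff_distrib)
      also have "\<dots> = (\<Sum>r\<in>UNIV. infsum (\<lambda>z. G r (z - w r) * phi N z - G r z * phi N z) UNIV)"
        using infsum_sum_fin[of UNIV "\<lambda>r z. G r (z - w r) * phi N z - G r z * phi N z" UNIV]
          summable_on_diff_real[OF sh sh0] by auto
      also have "\<dots> = (\<Sum>r\<in>UNIV. infsum (\<lambda>z. G r z * (phi N (z + w r) - phi N z)) UNIV)"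
      proof (rule sum.cong)
        fix r :: 'r
        have "infsum (\<lambda>z. G r (z - w r) * phi N z - G r z * phi N z) UNIV
            = infsum (\<lambda>z. G r z * phi N (z + w r)) UNIV - infsum (\<lambda>z. G r z * phi N z) UNIV"
          using infsum_diff_real[OF sh sh0] ri by simp
        also have "\<dots> = infsum (\<lambda>z. G r z * phi N (z + w r) - G r z * phi N z) UNIV"
          using infsum_diff_real[OF sh1 sh0] by simp
        finally show "infsum (\<lambda>z. G r (z - w r) * phi N z - G r z * phi N z) UNIV
            = infsum (\<lambda>z. G r z * (phi N (z + w r) - phi N z)) UNIV"
          by (simp add: right_diff_distrib)
      qed simp
      finally show ?thesis .
    qed
    have e3: "\<bar>infsum (\<lambda>z. G r z * (phi N (z + w r) - phi N z)) UNIV\<bar> \<le> 14 * K * sqrt (T r M)" for r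
      using term_bound[OF G2, of "w r" K N] Kw[of r] K1 N0 unfolding T_def by auto
    have "\<bar>infsum F UNIV\<bar> \<le> \<bar>infsum F UNIV - infsum (\<lambda>z. F z * phi N z) UNIV\<bar> + \<bar>infsum (\<lambda>z. F z * phi N z) UNIV\<bar>"
      by linarith
    also have "\<dots> \<le> TF N + (\<Sum>r\<in>UNIV. 14 * K * sqrt (T r M))"
    proof (rule add_mono)
      show "\<bar>infsum F UNIV - infsum (\<lambda>z. F z * phi N z) UNIV\<bar> \<le> TF N" using e1 e1b by simp
      show "\<bar>infsum (\<lambda>z. F z * phi N z) UNIV\<bar> \<le> (\<Sum>r\<in>UNIV. 14 * K * sqrt (T r M))"
        unfolding e2 by (rule order_trans[OF sum_abs], rule sum_mono, rule e3)
    qed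
    finally show ?thesis unfolding N_def .
  qed
  have l1: "(\<lambda>M. TF (M + K)) \<longlonglongrightarrow> 0"
    using LIMSEQ_ignore_initial_segment[OF tail_tendsto[OF Fs]] unfolding TF_def by simp
  have l2: "(\<lambda>M. T r M) \<longlonglongrightarrow> 0" for r
    using tail_tendsto[OF G2] unfolding T_def by simp
  have "(\<lambda>M. TF (M + K) + (\<Sum>r\<in>UNIV. 14 * K * sqrt (T r M))) \<longlonglongrightarrow> 0 + (\<Sum>r\<in>(UNIV::'r set). 14 * K * sqrt 0)"
    by (intro tendsto_add l1 tendsto_sum tendsto_mult_left tendsto_real_sqrt l2)
  then have lim: "(\<lambda>M. TF (M + K) + (\<Sum>r\<in>UNIV. 14 * K * sqrt (T r M))) \<longlonglongrightarrow> 0" by simp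
  have "\<bar>infsum F UNIV\<bar> \<le> 0"
    by (rule LIMSEQ_le_const[OF lim]) (use bound in auto)
  then show ?thesis by simp
qed




lemma vec2_nth[simp]: "vec2 a b $ 1 = a" "vec2 a b $ 2 = b"
  by (simp_all add: vec2_def)

lemma vec2_eta: "x = vec2 (x$1) (x$2)"
  by (simp add: vec_eq_iff forall_2)

lemma vec2_eq_iff: "vec2 a b = vec2 c d \<longleftrightarrow> a = c \<and> b = d"
  by (simp add: vec_eq_iff forall_2)

lemma vec2_add: "vec2 a b + vec2 c d = vec2 (a+c) (b+d)"
  by (simp add: vec_eq_iff forall_2)

lemma vec2_diff: "vec2 a b - vec2 c d = vec2 (a-c) (b-d)"
  by (simp add: vec_eq_iff forall_2)

lemma vec2_scale: "r *\<^sub>R vec2 a b = vec2 (r*a) (r*b)"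
  by (simp add: vec_eq_iff forall_2)

lemma mat2_mult: "(A::real^2^2) *v vec2 a b = vec2 (A$1$1*a + A$1$2*b) (A$2$1*a + A$2$2*b)"
  by (simp add: vec_eq_iff forall_2 matrix_vector_mult_def sum_2)

lemma mv_scaleR: "(A::real^'n^'m) *v (c *\<^sub>R x) = c *\<^sub>R (A *v x)"
  by (simp add: vec_eq_iff matrix_vector_mult_def sum_distrib_left algebra_simps)

lemma norm_vec2_sq: "(norm (vec2 a b))^2 = a^2 + b^2"
  unfolding power2_norm_eq_inner by (simp add: inner_vec_def sum_2 power2_eq_square)

lemma E_sq: "lat_mat Square *v vec2 a b = vec2 a b"
  by (simp add: lat_mat_def)

lemma E_tri: "lat_mat Triangular *v vec2 a b = vec2 (a + b/2) (sqrt 3 / 2 * b)"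
  by (simp add: lat_mat_def mat2_mult)

lemma Q_sq: "lat_rot Square *v vec2 x y = vec2 (-y) x"
  by (simp add: lat_rot_def rot_def mat2_mult)

lemma Q_tri: "lat_rot Triangular *v vec2 x y = vec2 (-x/2 - sqrt 3/2 * y) (sqrt 3/2 * x - y/2)"
  by (simp add: lat_rot_def rot_def mat2_mult cos_120 sin_120)

lemma s3: "sqrt 3 * sqrt 3 = (3::real)" by simp
lemma s3': "sqrt 3 * (sqrt 3 * x) = (3::real) * x" by (simp flip: mult.assoc)

lemma Q4_sq: "lat_rot Square *v (lat_rot Square *v (lat_rot Square *v (lat_rot Square *v v))) = v"
proof -
  have "lat_rot Square *v (lat_rot Square *v (lat_rot Square *v (lat_rot Square *v vec2 (v$1) (v$2)))) = vec2 (v$1) (v$2)"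
    unfolding Q_sq by simp
  then show ?thesis by (simp flip: vec2_eta)
qed

lemma Q3_tri: "lat_rot Triangular *v (lat_rot Triangular *v (lat_rot Triangular *v v)) = v"
proof -
  have "lat_rot Triangular *v (lat_rot Triangular *v (lat_rot Triangular *v vec2 (v$1) (v$2))) = vec2 (v$1) (v$2)"
    unfolding Q_tri vec2_eq_iff by (simp add: algebra_simps s3 s3' field_simps)
  then show ?thesis by (simp flip: vec2_eta)
qed

definition E :: "lattice_kind \<Rightarrow> int \<times> int \<Rightarrow> real^2" where
  "E k z = lat_mat k *v vec2 (of_int (fst z)) (of_int (snd z))"

lemma lattice_E: "lattice k = range (E k)"
  unfolding lattice_def E_def by (auto simp: image_def)

lemma E_add: "E k (z + z') = E k z + E k z'"
  unfolding E_def by (simp add: vec2_add flip: matrix_vector_right_distrib)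

lemma E_diff: "E k (z - z') = E k z - E k z'"
  unfolding E_def by (simp add: vec2_diff flip: matrix_vector_mult_diff_distrib)

lemma E_inj: "inj (E k)"
proof (rule injI)
  fix z z' assume h: "E k z = E k z'"
  show "z = z'"
  proof (cases k)
    case Square then show ?thesis using h by (simp add: E_def E_sq vec2_eq_iff prod_eq_iff)
  next
    case Triangular
    then have "of_int (snd z) = (of_int (snd z') :: real)"
      using h by (simp add: E_def E_tri vec2_eq_iff)
    then have "snd z = snd z'" by simp
    moreover have "fst z = fst z'"
      using h Triangular \<open>snd z = snd z'\<close> by (simp add: E_def E_tri vec2_eq_iff)
    ultimately show ?thesis by (simp add: prod_eq_iff)
  qed
qed

lemma lattice_add: "x \<in> lattice k \<Longrightarrow> y \<in> lattice k \<Longrightarrow> x + y \<in> lattice k"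
  unfolding lattice_E by (auto simp flip: E_add)

lemma lattice_diff: "x \<in> lattice k \<Longrightarrow> y \<in> lattice k \<Longrightarrow> x - y \<in> lattice k"
  unfolding lattice_E by (auto simp flip: E_diff)

lemma Q_E: "lat_rot k *v E k (a, b) = (case k of Square \<Rightarrow> E k (-b, a) | Triangular \<Rightarrow> E k (-a-b, a))"
proof (cases k)
  case Square then show ?thesis by (simp add: E_def E_sq Q_sq)
next
  case Triangular then show ?thesis
    by (simp add: E_def E_tri Q_tri vec2_eq_iff algebra_simps s3 s3' field_simps)
qed

lemma Q_lat: "x \<in> lattice k \<Longrightarrow> lat_rot k *v x \<in> lattice k"
  unfolding lattice_E
proof (elim imageE)
  fix z assume "x = E k z"
  then show "lat_rot k *v x \<in> range (E k)"
    using Q_E[of k "fst z" "snd z"] by (cases k) auto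
qed




lemma odd_sum_sq:
  fixes a b :: int
  assumes "a^2 + b^2 = 1"
  shows "odd (a + b)"
proof -
  have "(a+b)^2 = 1 + 2*(a*b)" using assms by (simp add: power2_eq_square algebra_simps)
  then have "odd ((a+b)^2)" by simp
  then show ?thesis by simp
qed

lemma N_bound:
  fixes x y :: int
  assumes "x^2 + x*y + y^2 = 1"
  shows "x \<in> {-1,0,1} \<and> y \<in> {-1,0,1}"
proof -
  have i1: "4*(x^2 + x*y + y^2) = (2*x+y)^2 + 3*y^2" by (simp add: power2_eq_square algebra_simps)
  have i2: "4*(x^2 + x*y + y^2) = (2*y+x)^2 + 3*x^2" by (simp add: power2_eq_square algebra_simps)
  have "3*y^2 \<le> 4" "3*x^2 \<le> 4" using i1 i2 assms by (smt (verit) zero_le_power2)+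
  then have "y^2 \<le> 1" "x^2 \<le> 1" by presburger+
  then have "\<bar>y\<bar> \<le> 1" "\<bar>x\<bar> \<le> 1" by (simp_all add: abs_square_le_1)
  then show ?thesis by auto
qed

lemma tri_mod3:
  fixes e1 e2 f1 f2 :: int
  assumes "e1^2 + e1*e2 + e2^2 = 1" "f1^2 + f1*f2 + f2^2 = 1"
    "(e1-f1)^2 + (e1-f1)*(e2-f2) + (e2-f2)^2 = 1"
  shows "3 dvd (e1 - e2) + (f1 - f2)"
proof -
  from N_bound[OF assms(1)] N_bound[OF assms(2)]
  have "e1 \<in> {-1,0,1}" "e2 \<in> {-1,0,1}" "f1 \<in> {-1,0,1}" "f2 \<in> {-1,0,1}" by auto
  then show ?thesis using assms by auto
qed

lemma lat_sq_vec: "x \<in> lattice Square \<Longrightarrow> \<exists>a b::int. x = vec2 (of_int a) (of_int b)"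
  unfolding lattice_def by (auto simp: E_sq)

lemma norm_E_tri: "(norm (E Triangular (x, y)))^2 = of_int (x^2 + x*y + y^2)"
  unfolding E_def fst_conv snd_conv E_tri norm_vec2_sq by (simp add: power2_eq_square algebra_simps s3 s3')

lemma t_lat:
  assumes "admissible_centre k xh"
  shows "xh - lat_rot k *v xh \<in> lattice k"
proof (cases k)
  case Square
  then obtain z v w where h: "norm v = 1" "norm w = 1" "z \<in> lattice k" "z + v \<in> lattice k"
     "z + w \<in> lattice k" "xh = z + (1/2) *\<^sub>R (v + w)"
    using assms unfolding admissible_centre_def by auto
  have "v \<in> lattice k" using lattice_diff[OF h(4) h(3)] by simp
  then obtain v1 v2 :: int where v: "v = vec2 (of_int v1) (of_int v2)" using lat_sq_vec Square by blast
  have "w \<in> lattice k" using lattice_diff[OF h(5) h(3)] by simp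
  then obtain w1 w2 :: int where w: "w = vec2 (of_int w1) (of_int w2)" using lat_sq_vec Square by blast
  obtain z1 z2 :: int where z: "z = vec2 (of_int z1) (of_int z2)" using lat_sq_vec Square h(3) by blast
  have "real_of_int (v1^2 + v2^2) = 1" using h(1) norm_vec2_sq[of "of_int v1" "of_int v2"] v by simp
  then have "v1^2 + v2^2 = 1" by linarith
  then have ov: "odd (v1 + v2)" by (rule odd_sum_sq)
  have "real_of_int (w1^2 + w2^2) = 1" using h(2) norm_vec2_sq[of "of_int w1" "of_int w2"] w by simp
  then have "w1^2 + w2^2 = 1" by linarith
  then have ow: "odd (w1 + w2)" by (rule odd_sum_sq)
  obtain m1 where m1: "v1 + w1 + v2 + w2 = 2 * m1" using ov ow
    by (metis add.assoc add.left_commute dvdE odd_add)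
  obtain m2 where m2: "v2 + w2 - v1 - w1 = 2 * m2" using ov ow
    by (metis (no_types, opaque_lifting) add_diff_eq diff_add_eq dvdE even_add even_diff odd_add)
  have "xh - lat_rot k *v xh = vec2 (of_int (z1 + z2 + m1)) (of_int (z2 - z1 + m2))"
  proof -
    have "real_of_int (v1 + w1 + v2 + w2) = 2 * of_int m1" using m1 by simp
    moreover have "real_of_int (v2 + w2 - v1 - w1) = 2 * of_int m2" using m2 by simp
    ultimately show ?thesis
      unfolding h(6) Square v w z by (simp add: Q_sq vec2_add vec2_scale vec2_diff vec2_eq_iff algebra_simps) (simp add: field_simps)
  qed
  moreover have "vec2 (of_int (z1 + z2 + m1)) (of_int (z2 - z1 + m2)) \<in> lattice k"
    unfolding Square lattice_def E_sq by blast
  ultimately show ?thesis by simp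
next
  case Triangular
  then obtain a b c where h: "a \<in> lattice k" "b \<in> lattice k" "c \<in> lattice k"
    "dist a b = 1" "dist b c = 1" "dist a c = 1" "xh = (1/3) *\<^sub>R (a + b + c)"
    using assms unfolding admissible_centre_def by auto
  obtain \<alpha> \<beta> \<gamma> where abc: "a = E k \<alpha>" "b = E k \<beta>" "c = E k \<gamma>"
    using h(1-3) unfolding lattice_E by blast
  define e where "e = \<alpha> - \<beta>"
  define f where "f = \<alpha> - \<gamma>"
  have N1: "fst e^2 + fst e * snd e + snd e^2 = 1"
  proof -
    have "a - b = E k e" unfolding e_def abc E_diff ..
    then have "(norm (E Triangular (fst e, snd e)))^2 = 1" using h(4) Triangular by (simp add: dist_norm)
    then show ?thesis unfolding norm_E_tri by linarith
  qed
  have N2: "fst f^2 + fst f * snd f + snd f^2 = 1"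
  proof -
    have "a - c = E k f" unfolding f_def abc E_diff ..
    then have "(norm (E Triangular (fst f, snd f)))^2 = 1" using h(6) Triangular by (simp add: dist_norm)
    then show ?thesis unfolding norm_E_tri by linarith
  qed
  have N3: "(fst e - fst f)^2 + (fst e - fst f) * (snd e - snd f) + (snd e - snd f)^2 = 1"
  proof -
    have "c - b = E k (e - f)" unfolding e_def f_def abc E_diff[symmetric] by (simp add: algebra_simps)
    moreover have "norm (c - b) = 1" using h(5) by (simp add: dist_norm norm_minus_commute)
    moreover have "(fst e - fst f, snd e - snd f) = e - f" by (simp add: prod_eq_iff)
    ultimately have "(norm (E Triangular (fst e - fst f, snd e - snd f)))^2 = 1"
      using Triangular by simp
    then show ?thesis unfolding norm_E_tri by linarith
  qed
  have d3: "3 dvd (fst e - snd e) + (fst f - snd f)" using tri_mod3[OF N1 N2 N3] .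
  define p where "p = fst \<alpha> + fst \<beta> + fst \<gamma>"
  define q where "q = snd \<alpha> + snd \<beta> + snd \<gamma>"
  have "q - p = 3 * (snd \<alpha> - fst \<alpha>) + ((fst e - snd e) + (fst f - snd f))"
    unfolding p_def q_def e_def f_def by simp
  then have "3 dvd (q - p)" using d3 by presburger
  then obtain m2 where m2: "q - p = 3 * m2" by blast
  have m1: "2 * p + q = 3 * (p + m2)" using m2 by simp
  have sum: "a + b + c = E k (p, q)" unfolding abc p_def q_def E_add[symmetric] by (rule arg_cong[where f="E k"]) (simp add: prod_eq_iff)
  have "xh - lat_rot k *v xh = E k (p + m2, m2)"
  proof -
    have r1: "real_of_int q - of_int p = 3 * of_int m2" using m2 by (metis of_int_diff of_int_mult of_int_numeral)
    have "xh - lat_rot k *v xh = (1/3) *\<^sub>R (E k (p, q) - lat_rot k *v E k (p, q))"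
      unfolding h(7) sum by (simp add: matrix_vector_mult_diff_distrib scaleR_diff_right mv_scaleR)
    also have "\<dots> = (1/3) *\<^sub>R (E k (p, q) - E k (-p-q, p))" using Q_E[of k p q] Triangular by simp
    also have "\<dots> = E k (p + m2, m2)"
      unfolding Triangular E_def using r1
      by (simp add: E_tri vec2_diff vec2_scale vec2_eq_iff algebra_simps) (simp add: field_simps)
    finally show ?thesis .
  qed
  then show ?thesis unfolding lattice_E by simp
qed

lemma L_lat: "admissible_centre k xh \<Longrightarrow> x \<in> lattice k \<Longrightarrow> lat_L k xh x \<in> lattice k"
proof -
  assume a: "admissible_centre k xh" "x \<in> lattice k"
  have "lat_L k xh x = lat_rot k *v x + (xh - lat_rot k *v xh)"
    unfolding lat_L_def by (simp add: matrix_vector_mult_diff_distrib)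
  then show ?thesis using lattice_add[OF Q_lat[OF a(2)] t_lat[OF a(1)]] by simp
qed

lemma L_shift: "lat_L k xh (x + y) = lat_L k xh x + lat_rot k *v y"
  unfolding lat_L_def by (simp add: matrix_vector_right_distrib algebra_simps)

lemma L_minus: "lat_L k xh (x - y) = lat_L k xh x - lat_rot k *v y"
  unfolding lat_L_def by (simp add: matrix_vector_mult_diff_distrib algebra_simps)

lemma L_affine: "lat_L k xh x = lat_rot k *v x + (xh - lat_rot k *v xh)"
  unfolding lat_L_def by (simp add: matrix_vector_mult_diff_distrib)

lemma L_bij:
  assumes "admissible_centre k xh"
  shows "bij_betw (lat_L k xh) (lattice k) (lattice k)"
proof -
  define L where "L = lat_L k xh"
  have Lm: "L x - xh = lat_rot k *v (x - xh)" for x unfolding L_def lat_L_def by simp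
  have into: "x \<in> lattice k \<Longrightarrow> L x \<in> lattice k" for x using L_lat[OF assms] L_def by simp
  obtain g where g: "\<And>x. g (L x) = x" "\<And>x. L (g x) = x" "\<And>x. x \<in> lattice k \<Longrightarrow> g x \<in> lattice k"
  proof (cases k)
    case Square
    have "L (L (L (L x))) = x" for x
    proof -
      have "L (L (L (L x))) - xh = x - xh" unfolding Lm Square by (rule Q4_sq)
      then show ?thesis by simp
    qed
    then show ?thesis using that[of "\<lambda>x. L (L (L x))"] into by blast
  next
    case Triangular
    have "L (L (L x)) = x" for x
    proof -
      have "L (L (L x)) - xh = x - xh" unfolding Lm Triangular by (rule Q3_tri)
      then show ?thesis by simp
    qed
    then show ?thesis using that[of "\<lambda>x. L (L x)"] into by blast
  qed
  show ?thesis unfolding L_def[symmetric]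
    by (rule bij_betwI[where g=g]) (use into g in auto)
qed




lemma Q_inj: "lat_rot k *v x = lat_rot k *v y \<Longrightarrow> x = y"
  by (cases k) (metis Q4_sq, metis Q3_tri)

lemma fd_chain:
  fixes g :: "'a::real_normed_vector \<Rightarrow> real" and P :: "'b::real_normed_vector \<Rightarrow> 'a"
  assumes "g differentiable (at (P A))" "bounded_linear P" "\<And>B. f B = g (P B)"
  shows "frechet_derivative f (at A) v = frechet_derivative g (at (P A)) (P v)"
proof -
  have d: "(g has_derivative frechet_derivative g (at (P A))) (at (P A))"
    using assms(1) frechet_derivative_works by blast
  have "((\<lambda>B. g (P B)) has_derivative (\<lambda>v. frechet_derivative g (at (P A)) (P v))) (at A)"
    by (rule has_derivative_compose[OF bounded_linear_imp_has_derivative[OF assms(2)] d])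
  moreover have "f = (\<lambda>B. g (P B))" using assms(3) by auto
  ultimately have "(f has_derivative (\<lambda>v. frechet_derivative g (at (P A)) (P v))) (at A)" by simp
  from frechet_derivative_at[OF this] show ?thesis by metis
qed

lemma hess_sym:
  fixes V :: "real^'r::finite \<Rightarrow> real" and \<pi> :: "'r \<Rightarrow> 'r"
  assumes C6: "C_k 6 V" and bij: "bij \<pi>"
    and sym: "\<And>A. V A = V (\<chi> r. A $ \<pi> r)"
  shows "hess0 V (\<pi> r) (\<pi> s) = hess0 V r s"
proof -
  define P where "P A = (\<chi> r. A $ \<pi> r)" for A :: "real^'r"
  have "linear P" unfolding P_def by (rule linearI) (simp_all add: vec_eq_iff)
  then have blP: "bounded_linear P" using linear_conv_bounded_linear by blast
  have six: "(6::nat) = Suc (Suc 4)" by simp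
  have C6': "V differentiable_on UNIV \<and> (\<forall>v. C_k (Suc 4) (\<lambda>x. frechet_derivative V (at x) v))"
    using C6 unfolding six C_k.simps(2) by blast
  have dV: "V differentiable (at x)" for x
    using C6' unfolding differentiable_on_def by auto
  have dH: "(\<lambda>A. frechet_derivative V (at A) v) differentiable (at x)" for v x
    using C6' unfolding C_k.simps(2) differentiable_on_def by auto
  have P_axis: "P (axis s 1) = axis (inv \<pi> s) 1" for s
    unfolding P_def axis_def using bij by (auto simp: vec_eq_iff bij_inv_eq_iff)
  have D1: "frechet_derivative V (at A) v = frechet_derivative V (at (P A)) (P v)" for A v
    by (rule fd_chain[OF dV blP]) (simp add: sym[symmetric] P_def)
  have D2: "frechet_derivative (\<lambda>A. frechet_derivative V (at A) (axis s 1)) (at 0) w =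
            frechet_derivative (\<lambda>A. frechet_derivative V (at A) (axis (inv \<pi> s) 1)) (at (P 0)) (P w)"
    for s w
    by (rule fd_chain[OF dH blP]) (simp add: D1[of _ "axis s 1"] P_axis)
  have P0: "P 0 = 0" by (simp add: P_def vec_eq_iff)
  have "hess0 V r s = hess0 V (inv \<pi> r) (inv \<pi> s)" for r s
  proof -
    have "hess0 V r s = frechet_derivative (\<lambda>A. frechet_derivative V (at A) (axis (inv \<pi> s) 1)) (at (P 0)) (P (axis r 1))"
      unfolding hess0_def by (rule D2)
    then show ?thesis unfolding P0 P_axis hess0_def .
  qed
  then have "hess0 V (\<pi> r) (\<pi> s) = hess0 V (inv \<pi> (\<pi> r)) (inv \<pi> (\<pi> s))" .
  then show ?thesis using bij by (simp add: bij_is_inj)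
qed

lemma force_eq:
  "force V \<rho> u x = (\<Sum>r\<in>UNIV. (\<Sum>s\<in>UNIV. hess0 V r s * Dfd u (\<rho> s) (x - \<rho> r))
                                 - (\<Sum>s\<in>UNIV. hess0 V r s * Dfd u (\<rho> s) x))"
  unfolding force_def divR_def by simp

lemma force_sym:
  fixes \<rho> :: "'r::finite \<Rightarrow> real^2" and \<pi> :: "'r \<Rightarrow> 'r"
  assumes bij: "bij \<pi>" and rho_pi: "\<And>r. \<rho> (\<pi> r) = lat_rot k *v \<rho> r"
    and H: "\<And>r s. hess0 V (\<pi> r) (\<pi> s) = hess0 V r s"
    and Rl: "\<And>r. \<rho> r \<in> lattice k"
    and usym: "\<And>x. x \<in> lattice k \<Longrightarrow> u (lat_L k xh x) = u x"
    and ad: "admissible_centre k xh"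
    and x: "x \<in> lattice k"
  shows "force V \<rho> u (lat_L k xh x) = force V \<rho> u x"
proof -
  define L where "L = lat_L k xh"
  define G where "G r y = (\<Sum>s\<in>UNIV. hess0 V r s * Dfd u (\<rho> s) y)" for r y
  have D: "Dfd u (\<rho> (\<pi> s)) (L y) = Dfd u (\<rho> s) y" if y: "y \<in> lattice k" for s y
  proof -
    have "L y + \<rho> (\<pi> s) = L (y + \<rho> s)" unfolding L_def rho_pi L_shift ..
    moreover have "y + \<rho> s \<in> lattice k" using lattice_add[OF y Rl] .
    ultimately show ?thesis unfolding Dfd_def L_def using usym y by simp
  qed
  have Gs: "G (\<pi> r) (L y) = G r y" if y: "y \<in> lattice k" for r y
  proof -
    have "G (\<pi> r) (L y) = (\<Sum>s\<in>UNIV. hess0 V (\<pi> r) (\<pi> s) * Dfd u (\<rho> (\<pi> s)) (L y))"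
      unfolding G_def by (rule sum.reindex_bij_betw[OF bij, symmetric])
    also have "\<dots> = G r y" unfolding G_def H D[OF y] ..
    finally show ?thesis .
  qed
  have "force V \<rho> u (L x) = (\<Sum>r\<in>UNIV. G r (L x - \<rho> r) - G r (L x))"
    unfolding force_eq G_def ..
  also have "\<dots> = (\<Sum>r\<in>UNIV. G (\<pi> r) (L x - \<rho> (\<pi> r)) - G (\<pi> r) (L x))"
    by (rule sum.reindex_bij_betw[OF bij, symmetric])
  also have "\<dots> = (\<Sum>r\<in>UNIV. G (\<pi> r) (L (x - \<rho> r)) - G (\<pi> r) (L x))"
    unfolding L_def rho_pi L_minus ..
  also have "\<dots> = (\<Sum>r\<in>UNIV. G r (x - \<rho> r) - G r x)"
    using Gs[OF lattice_diff[OF x Rl]] Gs[OF x] by simp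
  also have "\<dots> = force V \<rho> u x" unfolding force_eq G_def ..
  finally show ?thesis unfolding L_def .
qed

lemma lat_norm_ge1:
  assumes "x \<in> lattice k" "x \<noteq> 0"
  shows "1 \<le> norm x"
proof -
  obtain a b where x: "x = E k (a, b)" using assms(1) unfolding lattice_E by auto
  have v0: "vec2 0 0 = (0::real^2)" by (simp add: vec_eq_iff forall_2)
  have ab: "a \<noteq> 0 \<or> b \<noteq> 0" using assms(2) x by (auto simp: E_def v0)
  have "(norm x)^2 \<ge> 1"
  proof (cases k)
    case Square
    have "(norm x)^2 = of_int (a^2 + b^2)"
      unfolding x Square E_def fst_conv snd_conv E_sq norm_vec2_sq by simp
    moreover have "a^2 + b^2 \<ge> 1"
    proof -
      have "a^2 > 0 \<or> b^2 > 0" using ab by auto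
      then have "a^2 + b^2 > 0" by (auto intro: add_pos_nonneg add_nonneg_pos)
      then show ?thesis by simp
    qed
    ultimately show ?thesis by (metis of_int_1 of_int_le_iff)
  next
    case Triangular
    have "(norm x)^2 = of_int (a^2 + a*b + b^2)"
      unfolding x Triangular norm_E_tri ..
    moreover have "a^2 + a*b + b^2 \<ge> 1"
    proof -
      have i1: "4*(a^2 + a*b + b^2) = (2*a+b)^2 + 3*b^2" by (simp add: power2_eq_square algebra_simps)
      have pos: "(2*a+b)^2 + 3*b^2 > 0"
      proof (cases "b = 0")
        case True then show ?thesis using ab by simp
      next
        case False then have "b^2 > 0" by simp
        moreover have "(2*a+b)^2 \<ge> 0" by simp
        ultimately show ?thesis by linarith
      qed
      have "0 < 4 * (a^2 + a*b + b^2)" unfolding i1 by (rule pos)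
      then have "a^2 + a*b + b^2 > 0" by simp
      then show ?thesis by simp
    qed
    ultimately show ?thesis by (metis of_int_1 of_int_le_iff)
  qed
  note sq1 = this
  show ?thesis
  proof (rule ccontr)
    assume "\<not> 1 \<le> norm x"
    then have "norm x < 1" by simp
    then have "(norm x)^2 < 1^2" by (intro power_strict_mono) auto
    then show False using sq1 by simp
  qed
qed




lemma infsum_blin:
  assumes "bounded_linear h" "g summable_on A"
  shows "infsum (\<lambda>x. h (g x)) A = h (infsum g A)"
  by (metis assms has_sum_bounded_linear has_sum_infsum infsumI)

lemma summable_add_point:
  fixes g :: "'a \<Rightarrow> real"
  assumes "g summable_on (A - {a})"
  shows "g summable_on A"
proof -
  have "g summable_on ((A - {a}) \<union> {a})"
    by (rule summable_on_union[OF assms]) simp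
  then show ?thesis by (rule summable_on_subset) auto
qed

lemma sq_comb_summable:
  fixes D :: "'s::finite \<Rightarrow> 'a \<Rightarrow> real"
  assumes "\<And>s. (\<lambda>x. (D s x)^2) summable_on A"
  shows "(\<lambda>x. (\<Sum>s\<in>UNIV. c s * D s x)^2) summable_on A"
proof -
  have "(\<lambda>x. \<Sum>s\<in>UNIV. (c s)^2 * real CARD('s) * (D s x)^2) summable_on A"
    using infsum_sum_fin[of UNIV "\<lambda>s x. (c s)^2 * real CARD('s) * (D s x)^2" A]
      summable_on_cmult_right[OF assms] by auto
  then show ?thesis
  proof (rule summable_on_comparison_test)
    fix x
    have "(\<Sum>s\<in>UNIV. c s * D s x)^2 \<le> (\<Sum>s\<in>UNIV. (c s * D s x)^2) * card (UNIV::'s set)"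
      by (rule sum_squared_le_sum_of_squares)
    also have "\<dots> = (\<Sum>s\<in>UNIV. (c s)^2 * real CARD('s) * (D s x)^2)"
      by (simp add: sum_distrib_right sum_distrib_left power_mult_distrib algebra_simps)
    finally show "(\<Sum>s\<in>UNIV. c s * D s x)^2 \<le> (\<Sum>s\<in>UNIV. (c s)^2 * real CARD('s) * (D s x)^2)" .
  qed simp
qed

lemma Qfix:
  assumes "lat_rot k *v m = m"
  shows "m = 0"
proof -
  define a where "a = m$1"
  define b where "b = m$2"
  have m: "m = vec2 a b" unfolding a_def b_def by (rule vec2_eta)
  have "a = 0 \<and> b = 0"
  proof (cases k)
    case Square
    then show ?thesis using assms unfolding m by (simp add: Q_sq vec2_eq_iff)
  next
    case Triangular
    then have e1: "a = -a/2 - sqrt 3/2 * b" and e2: "b = sqrt 3/2 * a - b/2"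
      using assms unfolding m by (simp_all add: Q_tri vec2_eq_iff)
    from e1 have e1': "3 * a = - sqrt 3 * b" by simp
    from e2 have e2': "3 * b = sqrt 3 * a" by simp
    have "9 * b = sqrt 3 * (3 * a)" using e2' by simp
    also have "\<dots> = - (sqrt 3 * sqrt 3) * b" using e1' by simp
    also have "\<dots> = - 3 * b" by simp
    finally have "b = 0" by simp
    then show ?thesis using e1' by simp
  qed
  then show ?thesis using m by (simp add: vec_eq_iff forall_2)
qed

lemma rot_entries:
  "lat_rot k $ 1 $ 1 = (case k of Square \<Rightarrow> 0 | Triangular \<Rightarrow> -1/2)"
  "lat_rot k $ 1 $ 2 = (case k of Square \<Rightarrow> -1 | Triangular \<Rightarrow> - sqrt 3 / 2)"
  "lat_rot k $ 2 $ 1 = (case k of Square \<Rightarrow> 1 | Triangular \<Rightarrow> sqrt 3 / 2)"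
  "lat_rot k $ 2 $ 2 = (case k of Square \<Rightarrow> 0 | Triangular \<Rightarrow> -1/2)"
  by (cases k; simp add: lat_rot_def rot_def cos_120 sin_120)+

lemma Mfix:
  fixes M :: "real^2^2"
  assumes fx: "M = lat_rot k ** M ** transpose (lat_rot k)" and sym: "M$1$2 = M$2$1"
  shows "M = (M$1$1) *\<^sub>R mat 1"
proof -
  define a where "a = M$1$1"
  define b where "b = M$1$2"
  define d where "d = M$2$2"
  define cn where "cn = lat_rot k $ 1 $ 1"
  define sn where "sn = lat_rot k $ 2 $ 1"
  have Q12: "lat_rot k $ 1 $ 2 = - sn" and Q22: "lat_rot k $ 2 $ 2 = cn"
    unfolding cn_def sn_def by (cases k; simp add: rot_entries)+
  have e11: "a = cn * cn * a - 2 * cn * sn * b + sn * sn * d"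
    using arg_cong[OF fx, of "\<lambda>X. X$1$1"] sym
    by (simp add: a_def b_def d_def matrix_matrix_mult_def transpose_def sum_2 Q12 Q22 cn_def[symmetric] sn_def[symmetric] algebra_simps)
  have e12: "b = cn * sn * a + (cn * cn - sn * sn) * b - cn * sn * d"
    using arg_cong[OF fx, of "\<lambda>X. X$1$2"] sym
    by (simp add: a_def b_def d_def matrix_matrix_mult_def transpose_def sum_2 Q12 Q22 cn_def[symmetric] sn_def[symmetric] algebra_simps)
  have "a = d \<and> b = 0"
  proof (cases k)
    case Square
    then have "cn = 0" "sn = 1" unfolding cn_def sn_def by (simp_all add: rot_entries)
    then show ?thesis using e11 e12 by simp
  next
    case Triangular
    then have cs: "cn = -1/2" "sn = sqrt 3 / 2" unfolding cn_def sn_def by (simp_all add: rot_entries)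
    have ss: "sn * sn = 3/4" unfolding cs by (simp add: s3)
    have E1: "2 * sqrt 3 * b = 3 * (a - d)"
      using e11 unfolding cs by (simp add: algebra_simps s3 s3' field_simps)
    have E2: "sqrt 3 * (d - a) = 6 * b"
      using e12 unfolding cs by (simp add: algebra_simps s3 s3' field_simps)
    have "3 * (d - a) = sqrt 3 * (sqrt 3 * (d - a))" by (simp add: s3')
    also have "\<dots> = 3 * (2 * sqrt 3 * b)" using E2 by simp
    also have "\<dots> = 9 * (a - d)" using E1 by simp
    finally have "a = d" by simp
    then show ?thesis using E1 by simp
  qed
  then show ?thesis using sym
    by (simp add: vec_eq_iff forall_2 mat_def a_def b_def d_def)
qed




lemma outer_L:
  "outer (lat_L k xh x) (lat_L k xh x) =
     lat_rot k ** outer x x ** transpose (lat_rot k)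
     + outer (lat_rot k *v x) (xh - lat_rot k *v xh)
     + outer (xh - lat_rot k *v xh) (lat_rot k *v x)
     + outer (xh - lat_rot k *v xh) (xh - lat_rot k *v xh)"
  unfolding L_affine
  by (simp add: vec_eq_iff forall_2 outer_def matrix_matrix_mult_def transpose_def
      matrix_vector_mult_def sum_2 algebra_simps)

lemma infsum_add4:
  fixes a b c d :: "'a \<Rightarrow> 'b::{topological_comm_monoid_add, t2_space}"
  assumes "a summable_on A" "b summable_on A" "c summable_on A" "d summable_on A"
  shows "infsum (\<lambda>x. a x + b x + c x + d x) A = infsum a A + infsum b A + infsum c A + infsum d A"
proof -
  have s1: "(\<lambda>x. a x + b x) summable_on A" using summable_on_add assms by blast
  have s2: "(\<lambda>x. a x + b x + c x) summable_on A" using summable_on_add[OF s1 assms(3)] by blast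
  show ?thesis
    using infsum_add[OF s2 assms(4)] infsum_add[OF s1 assms(3)] infsum_add[OF assms(1,2)] by simp
qed

lemma nth_nth_blin: "bounded_linear (\<lambda>X::real^2^2. X $ i $ j)"
  using bounded_linear_compose[OF bounded_linear_vec_nth[of j] bounded_linear_vec_nth[of i]] by simp

lemma norm_sq_comp: "(norm (x::real^2))^2 = (x$1)^2 + (x$2)^2"
  using norm_vec2_sq[of "x$1" "x$2"] vec2_eta[of x] by simp

lemma outer_bound:
  fixes x :: "real^2"
  assumes "1 \<le> norm x"
  shows "norm (c *\<^sub>R x) \<le> 2 * norm (c *\<^sub>R outer x x)"
proof -
  have "norm (c *\<^sub>R x) = \<bar>c\<bar> * norm x" by simp
  also have "\<dots> \<le> \<bar>c\<bar> * (norm x)^2"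
    using assms by (intro mult_left_mono) (auto simp: power2_eq_square intro: order_trans[OF _ mult_right_mono[of 1 "norm x" "norm x"]])
  also have "\<dots> = \<bar>(c *\<^sub>R outer x x) $ 1 $ 1\<bar> + \<bar>(c *\<^sub>R outer x x) $ 2 $ 2\<bar>"
    unfolding norm_sq_comp by (simp add: outer_def abs_mult power2_eq_square algebra_simps)
  also have "\<dots> \<le> 2 * norm (c *\<^sub>R outer x x)"
  proof -
    have "\<bar>X $ i $ i\<bar> \<le> norm X" for X :: "real^2^2" and i
    proof -
      have "\<bar>(X $ i) $ i\<bar> \<le> norm (X $ i)" by (rule component_le_norm_cart)
      moreover have "norm (X $ i) \<le> norm X" by (rule Finite_Cartesian_Product.norm_nth_le)
      ultimately show ?thesis by linarith
    qed
    note h = this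
    show ?thesis using h[of "c *\<^sub>R outer x x" 1] h[of "c *\<^sub>R outer x x" 2] by linarith
  qed
  finally show ?thesis .
qed

theorem theorem5p9:
  fixes k :: lattice_kind
    and xh :: "real^2"
    and \<rho> :: "'r::finite \<Rightarrow> real^2"
    and V :: "real^'r \<Rightarrow> real"
    and p :: real
    and u :: "real^2 \<Rightarrow> real"
  assumes xh: "admissible_centre k xh"
    and rho_inj: "inj \<rho>"
    and R_sub: "range \<rho> \<subseteq> lattice k - {0}"
    and R_span: "lattice k = {y. \<exists>c :: 'r \<Rightarrow> int. y = (\<Sum>r\<in>UNIV. of_int (c r) *\<^sub>R \<rho> r)}"
    and R_rot: "(\<lambda>y. lat_rot k *v y) ` range \<rho> = range \<rho>"
    and V_C6: "C_k 6 V"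
    and V_sym: "\<And>A. V A = V (\<chi> r. A $ (inv \<rho> (lat_rot k *v \<rho> r)))"
    and p_pos: "p > 0"
    and V_per: "\<And>A r. V (A + p *\<^sub>R axis r 1) = V A"
    and p_min: "\<And>r t. 0 < t \<Longrightarrow> t < p \<Longrightarrow> \<not> (\<forall>A. V (A + t *\<^sub>R axis r 1) = V A)"
    and V_stab: "lattice_stable (lattice k) \<rho> V"
    and u_H1: "in_H1 (lattice k) \<rho> u"
    and u_sym: "\<And>x. x \<in> lattice k \<Longrightarrow> u (lat_L k xh x) = u x"
  shows "((\<lambda>x. norm (force V \<rho> u x)) summable_on lattice k \<longrightarrow>
            (\<Sum>\<^sub>\<infinity>x\<in>lattice k. force V \<rho> u x) = 0)
       \<and> ((\<lambda>x. norm (force V \<rho> u x *\<^sub>R x)) summable_on lattice k \<longrightarrow>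
            (\<Sum>\<^sub>\<infinity>x\<in>lattice k. force V \<rho> u x *\<^sub>R x) = 0)
       \<and> ((\<lambda>x. norm (force V \<rho> u x *\<^sub>R outer x x)) summable_on lattice k \<longrightarrow>
            (\<exists>c::real. (\<Sum>\<^sub>\<infinity>x\<in>lattice k. force V \<rho> u x *\<^sub>R outer x x) = c *\<^sub>R mat 1))"
proof -
  define \<Lambda> where "\<Lambda> = lattice k"
  define f where "f = force V \<rho> u"
  define L where "L = lat_L k xh"
  define t where "t = xh - lat_rot k *v xh"
  define \<pi> where "\<pi> r = inv \<rho> (lat_rot k *v \<rho> r)" for r
  have Rl: "\<rho> r \<in> lattice k" for r using R_sub by auto
  have rho_pi: "\<rho> (\<pi> r) = lat_rot k *v \<rho> r" for r
  proof -
    have "lat_rot k *v \<rho> r \<in> range \<rho>" using R_rot by blast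
    then show ?thesis unfolding \<pi>_def by (rule f_inv_into_f)
  qed
  have inj_pi: "inj \<pi>"
  proof (rule injI)
    fix r r' assume "\<pi> r = \<pi> r'"
    then have "lat_rot k *v \<rho> r = lat_rot k *v \<rho> r'" using rho_pi by metis
    then have "\<rho> r = \<rho> r'" by (rule Q_inj)
    then show "r = r'" using rho_inj by (simp add: inj_eq)
  qed
  have bij_pi: "bij \<pi>" using inj_pi finite_UNIV_inj_surj[of \<pi>] by (simp add: bij_def)
  have H: "hess0 V (\<pi> r) (\<pi> s) = hess0 V r s" for r s
    by (rule hess_sym[OF V_C6 bij_pi]) (unfold \<pi>_def, rule V_sym)
  have fsym: "f (L x) = f x" if "x \<in> \<Lambda>" for x
    unfolding f_def L_def
    by (rule force_sym[where \<pi>=\<pi>]) (use bij_pi rho_pi H Rl u_sym xh that \<Lambda>_def in auto)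
  have Lbij: "bij_betw L \<Lambda> \<Lambda>" unfolding L_def \<Lambda>_def by (rule L_bij[OF xh])
  have injE: "inj_on (E k) UNIV" using E_inj by blast
  have \<Lambda>E: "\<Lambda> = E k ` UNIV" using lattice_E \<Lambda>_def by simp
  have S0: "infsum f \<Lambda> = 0" if fs: "(\<lambda>x. norm (f x)) summable_on \<Lambda>"
  proof -
    define G where "G r y = (\<Sum>s\<in>UNIV. hess0 V r s * Dfd u (\<rho> s) y)" for r y
    have G2: "(\<lambda>x. (G r x)^2) summable_on \<Lambda>" for r
      unfolding G_def by (rule sq_comb_summable) (use u_H1 in \<open>auto simp: in_H1_def \<Lambda>_def\<close>)
    define w where "w r = inv (E k) (\<rho> r)" for r
    have Ew: "E k (w r) = \<rho> r" for r
      unfolding w_def by (rule f_inv_into_f) (use Rl lattice_E in auto)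
    have G2': "(\<lambda>z. (G r (E k z))^2) summable_on UNIV" for r
      using G2[of r] summable_on_reindex[OF injE, of "\<lambda>x. (G r x)^2"] \<Lambda>E by (simp add: o_def)
    have Fs: "(\<lambda>z. norm (f (E k z))) summable_on UNIV"
      using fs summable_on_reindex[OF injE, of "\<lambda>x. norm (f x)"] \<Lambda>E by (simp add: o_def)
    have Feq: "f (E k z) = (\<Sum>r\<in>UNIV. G r (E k (z - w r)) - G r (E k z))" for z
      unfolding f_def force_eq G_def E_diff Ew ..
    have "infsum (\<lambda>z. f (E k z)) UNIV = 0"
      by (rule core[where G="\<lambda>r z. G r (E k z)" and F="\<lambda>z. f (E k z)" and w=w])
         (use G2' Feq Fs in auto)
    moreover have "infsum f \<Lambda> = infsum (\<lambda>z. f (E k z)) UNIV"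
      using infsum_reindex[OF injE, of f] \<Lambda>E by (simp add: o_def)
    ultimately show ?thesis by simp
  qed
  have from_x: "(\<lambda>x. norm (f x)) summable_on \<Lambda>" if ms: "(\<lambda>x. norm (f x *\<^sub>R x)) summable_on \<Lambda>"
  proof (rule summable_add_point[where a=0])
    show "(\<lambda>x. norm (f x)) summable_on (\<Lambda> - {0})"
    proof (rule summable_on_comparison_test[OF summable_on_subset[OF ms]])
      fix x assume x: "x \<in> \<Lambda> - {0}"
      then have "1 \<le> norm x" using lat_norm_ge1 \<Lambda>_def by auto
      then have "\<bar>f x\<bar> * 1 \<le> \<bar>f x\<bar> * norm x" by (intro mult_left_mono) auto
      then show "norm (f x) \<le> norm (f x *\<^sub>R x)" by simp
    qed auto
  qed
  have from_o: "(\<lambda>x. norm (f x *\<^sub>R x)) summable_on \<Lambda>"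
    if os: "(\<lambda>x. norm (f x *\<^sub>R outer x x)) summable_on \<Lambda>"
  proof (rule summable_add_point[where a=0])
    show "(\<lambda>x. norm (f x *\<^sub>R x)) summable_on (\<Lambda> - {0})"
    proof (rule summable_on_comparison_test[OF summable_on_subset[OF summable_on_cmult_right[OF os, of 2]]])
      fix x assume x: "x \<in> \<Lambda> - {0}"
      then have "1 \<le> norm x" using lat_norm_ge1 \<Lambda>_def by auto
      then show "norm (f x *\<^sub>R x) \<le> 2 * norm (f x *\<^sub>R outer x x)" by (rule outer_bound)
    qed auto
  qed
  have M0: "infsum (\<lambda>x. f x *\<^sub>R x) \<Lambda> = 0" if ms: "(\<lambda>x. norm (f x *\<^sub>R x)) summable_on \<Lambda>"
  proof -
    have fs: "(\<lambda>x. norm (f x)) summable_on \<Lambda>" by (rule from_x[OF ms])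
    have S: "infsum f \<Lambda> = 0" by (rule S0[OF fs])
    have fsum: "f summable_on \<Lambda>" using fs summable_on_iff_abs_summable_on_real by blast
    have xs: "(\<lambda>x. f x *\<^sub>R x) summable_on \<Lambda>" by (rule abs_summable_summable[OF ms])
    define m where "m = infsum (\<lambda>x. f x *\<^sub>R x) \<Lambda>"
    have "m = infsum (\<lambda>x. f (L x) *\<^sub>R L x) \<Lambda>"
      unfolding m_def using infsum_reindex_bij_betw[OF Lbij, of "\<lambda>x. f x *\<^sub>R x"] by simp
    also have "\<dots> = infsum (\<lambda>x. lat_rot k *v (f x *\<^sub>R x) + f x *\<^sub>R t) \<Lambda>"
    proof (rule infsum_cong)
      fix x assume x: "x \<in> \<Lambda>"
      show "f (L x) *\<^sub>R L x = lat_rot k *v (f x *\<^sub>R x) + f x *\<^sub>R t"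
        unfolding fsym[OF x] by (simp add: L_def L_affine t_def mv_scaleR scaleR_right_distrib)
    qed
    also have "\<dots> = lat_rot k *v m + infsum f \<Lambda> *\<^sub>R t"
    proof -
      have bl: "bounded_linear (\<lambda>v. lat_rot k *v v)" by simp
      have a1: "(\<lambda>x. lat_rot k *v (f x *\<^sub>R x)) summable_on \<Lambda>"
        by (rule summable_on_bounded_linear[OF bl xs])
      have a2: "(\<lambda>x. f x *\<^sub>R t) summable_on \<Lambda>"
        by (rule summable_on_scaleR_left) (rule fsum)
      have "infsum (\<lambda>x. lat_rot k *v (f x *\<^sub>R x) + f x *\<^sub>R t) \<Lambda>
          = infsum (\<lambda>x. lat_rot k *v (f x *\<^sub>R x)) \<Lambda> + infsum (\<lambda>x. f x *\<^sub>R t) \<Lambda>"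
        by (rule infsum_add[OF a1 a2])
      also have "infsum (\<lambda>x. lat_rot k *v (f x *\<^sub>R x)) \<Lambda> = lat_rot k *v m"
        unfolding m_def by (rule infsum_blin[OF bl xs])
      also have "infsum (\<lambda>x. f x *\<^sub>R t) \<Lambda> = infsum f \<Lambda> *\<^sub>R t"
        by (rule infsum_scaleR_left) (rule fsum)
      finally show ?thesis .
    qed
    also have "\<dots> = lat_rot k *v m" using S by simp
    finally have "lat_rot k *v m = m" by simp
    then show ?thesis using Qfix m_def by simp
  qed
  have M2: "\<exists>c::real. infsum (\<lambda>x. f x *\<^sub>R outer x x) \<Lambda> = c *\<^sub>R mat 1"
    if os: "(\<lambda>x. norm (f x *\<^sub>R outer x x)) summable_on \<Lambda>"
  proof -
    have ms: "(\<lambda>x. norm (f x *\<^sub>R x)) summable_on \<Lambda>" by (rule from_o[OF os])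
    have fs: "(\<lambda>x. norm (f x)) summable_on \<Lambda>" by (rule from_x[OF ms])
    have S: "infsum f \<Lambda> = 0" by (rule S0[OF fs])
    have m0: "infsum (\<lambda>x. f x *\<^sub>R x) \<Lambda> = 0" by (rule M0[OF ms])
    have fsum: "f summable_on \<Lambda>" using fs summable_on_iff_abs_summable_on_real by blast
    have xs: "(\<lambda>x. f x *\<^sub>R x) summable_on \<Lambda>" by (rule abs_summable_summable[OF ms])
    have oss: "(\<lambda>x. f x *\<^sub>R outer x x) summable_on \<Lambda>" by (rule abs_summable_summable[OF os])
    define M where "M = infsum (\<lambda>x. f x *\<^sub>R outer x x) \<Lambda>"
    define \<Phi>1 where "\<Phi>1 X = lat_rot k ** X ** transpose (lat_rot k)" for X :: "real^2^2"
    define \<Phi>2 where "\<Phi>2 v = outer (lat_rot k *v v) t" for v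
    define \<Phi>3 where "\<Phi>3 v = outer t (lat_rot k *v v)" for v
    have "linear \<Phi>1" unfolding \<Phi>1_def
      by (rule linearI) (simp_all add: vec_eq_iff matrix_matrix_mult_def transpose_def sum_2 algebra_simps)
    then have bl1: "bounded_linear \<Phi>1" using linear_conv_bounded_linear by blast
    have "linear \<Phi>2" unfolding \<Phi>2_def
      by (rule linearI) (simp_all add: vec_eq_iff outer_def matrix_vector_mult_def sum_2 algebra_simps)
    then have bl2: "bounded_linear \<Phi>2" using linear_conv_bounded_linear by blast
    have "linear \<Phi>3" unfolding \<Phi>3_def
      by (rule linearI) (simp_all add: vec_eq_iff outer_def matrix_vector_mult_def sum_2 algebra_simps)
    then have bl3: "bounded_linear \<Phi>3" using linear_conv_bounded_linear by blast
    have eq: "f x *\<^sub>R outer (L x) (L x) = \<Phi>1 (f x *\<^sub>R outer x x) + \<Phi>2 (f x *\<^sub>R x)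
                + \<Phi>3 (f x *\<^sub>R x) + f x *\<^sub>R outer t t" for x
      unfolding L_def outer_L \<Phi>1_def \<Phi>2_def \<Phi>3_def t_def
      by (simp add: vec_eq_iff forall_2 outer_def matrix_matrix_mult_def transpose_def
          matrix_vector_mult_def sum_2 algebra_simps)
    have "M = infsum (\<lambda>x. f (L x) *\<^sub>R outer (L x) (L x)) \<Lambda>"
      unfolding M_def using infsum_reindex_bij_betw[OF Lbij, of "\<lambda>x. f x *\<^sub>R outer x x"] by simp
    also have "\<dots> = infsum (\<lambda>x. \<Phi>1 (f x *\<^sub>R outer x x) + \<Phi>2 (f x *\<^sub>R x)
                + \<Phi>3 (f x *\<^sub>R x) + f x *\<^sub>R outer t t) \<Lambda>"
      by (rule infsum_cong) (simp add: fsym eq)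
    also have "\<dots> = \<Phi>1 M + \<Phi>2 (infsum (\<lambda>x. f x *\<^sub>R x) \<Lambda>) + \<Phi>3 (infsum (\<lambda>x. f x *\<^sub>R x) \<Lambda>)
                   + infsum f \<Lambda> *\<^sub>R outer t t"
      unfolding M_def
      by (subst infsum_add4)
         (simp_all add: summable_on_bounded_linear[OF bl1 oss] summable_on_bounded_linear[OF bl2 xs]
          summable_on_bounded_linear[OF bl3 xs] summable_on_scaleR_left[OF fsum]
          infsum_blin[OF bl1 oss] infsum_blin[OF bl2 xs] infsum_blin[OF bl3 xs] infsum_scaleR_left[OF fsum])
    also have "\<dots> = \<Phi>1 M"
      unfolding m0 S using linear_0[OF bounded_linear.linear[OF bl2]] linear_0[OF bounded_linear.linear[OF bl3]]
      by simp
    finally have fx: "M = lat_rot k ** M ** transpose (lat_rot k)" unfolding \<Phi>1_def .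
    have comp: "M $ i $ j = infsum (\<lambda>x. f x * (x $ i * x $ j)) \<Lambda>" for i j
      unfolding M_def using infsum_blin[OF nth_nth_blin[of i j] oss] by (simp add: outer_def)
    have sym: "M $ 1 $ 2 = M $ 2 $ 1" unfolding comp by (simp add: mult.commute)
    show ?thesis using Mfix[OF fx sym] unfolding M_def by blast
  qed
  show ?thesis using S0 M0 M2 unfolding \<Lambda>_def f_def by blast
qed


end
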